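(* Let $(X,d)$ be a metric space, $Y$ a complete subspace of $X$, and $T,g:X\to X$. Assume: (a) $T(X)\subseteq Y\cap g(X)$; (b) there exists $G\in\mathcal{G}$ which also satisfies (G3) such that for all $x,y\in X$, $$G\big(d(Tx,Ty),\,d(gx,gy),\,d(gx,Tx),\,d(gy,Ty),\,d(gx,Ty),\,d(gy,Tx)\big)\le0;$$ either (e) $Y\subseteq g(X)$, or alternatively (e$'$) $T$ and $g$ are compatible and both continuous; and $T$ and $g$ commute at their coincidence points. Then $T$ and $g$ have a unique common fixed point.
   Context: $\mathbb{R}_+=[0,\infty)$. $\Phi$: functions $\phi:\mathbb{R}_+\to\mathbb{R}_+$, increasing, $\phi(0)=0$, $\sum_{n\ge1}\phi^n(t)<\infty$ for every $t>0$. $\mathcal{G}$: lower semi-continuous $G:\mathbb{R}_+^6\to\mathbb{R}$ such that (G1) $G$ is decreasing in its fifth and sixth variables, and there is $\phi\in\Phi$ such that for all $r,s\ge0$, $G(r,s,s,r,r+s,0)\le0$ implies $r\le\phi(s)$; (G2) $G(r,0,r,0,0,r)>0$ for all $r>0$. (G3): $G(r,r,0,0,r,r)>0$ for all $r>0$. $T,g$ compatible: $\lim_n d(T(gx_n),g(Tx_n))=0$ whenever $\lim_n gx_n=\lim_n Tx_n$. $T$ and $g$ commute at coincidence points: $T(gx)=g(Tx)$ whenever $Tx=gx$. *)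

theory Defs
  imports "HOL-Analysis.Analysis"
begin

type_synonym real6 = "real \<times> real \<times> real \<times> real \<times> real \<times> real"

definition nonneg6 :: "real6 set" where
  "nonneg6 = {(a,b,c,d,e,f). 0 \<le> a \<and> 0 \<le> b \<and> 0 \<le> c \<and> 0 \<le> d \<and> 0 \<le> e \<and> 0 \<le> f}"

definition lsc_on :: "'a::metric_space set \<Rightarrow> ('a \<Rightarrow> real) \<Rightarrow> bool" where
  "lsc_on S f \<longleftrightarrow> (\<forall>x\<in>S. \<forall>e>0. \<exists>d>0. \<forall>y\<in>S. dist y x < d \<longrightarrow> f x - e < f y)"

definition PhiClass :: "(real \<Rightarrow> real) set" where
  "PhiClass = {\<phi>. (\<forall>t\<ge>0. \<phi> t \<ge> 0) \<and> mono_on {0..} \<phi> \<and> \<phi> 0 = 0 \<and>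
                   (\<forall>t>0. summable (\<lambda>n. (\<phi> ^^ Suc n) t))}"

text \<open>The class G (conditions G1 and G2 and lower semicontinuity on R_+^6).\<close>
definition GClass :: "(real6 \<Rightarrow> real) set" where
  "GClass = {G. lsc_on nonneg6 G
      \<and> (\<forall>a b c d e e' f. 0 \<le> a \<longrightarrow> 0 \<le> b \<longrightarrow> 0 \<le> c \<longrightarrow> 0 \<le> d \<longrightarrow> 0 \<le> e \<longrightarrow> e \<le> e' \<longrightarrow> 0 \<le> f
            \<longrightarrow> G (a,b,c,d,e',f) \<le> G (a,b,c,d,e,f))
      \<and> (\<forall>a b c d e f f'. 0 \<le> a \<longrightarrow> 0 \<le> b \<longrightarrow> 0 \<le> c \<longrightarrow> 0 \<le> d \<longrightarrow> 0 \<le> e \<longrightarrow> 0 \<le> f \<longrightarrow> f \<le> f'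
            \<longrightarrow> G (a,b,c,d,e,f') \<le> G (a,b,c,d,e,f))
      \<and> (\<exists>\<phi>\<in>PhiClass. \<forall>r s. 0 \<le> r \<longrightarrow> 0 \<le> s \<longrightarrow> G (r,s,s,r,r+s,0) \<le> 0 \<longrightarrow> r \<le> \<phi> s)
      \<and> (\<forall>r>0. G (r,0,r,0,0,r) > 0)}"

definition G3 :: "(real6 \<Rightarrow> real) \<Rightarrow> bool" where
  "G3 G \<longleftrightarrow> (\<forall>r>0. G (r,r,0,0,r,r) > 0)"

definition compatible :: "('a::metric_space \<Rightarrow> 'a) \<Rightarrow> ('a \<Rightarrow> 'a) \<Rightarrow> bool" where
  "compatible T g \<longleftrightarrow> (\<forall>x :: nat \<Rightarrow> 'a. \<forall>z.
      (\<lambda>n. g (x n)) \<longlonglongrightarrow> z \<longrightarrow> (\<lambda>n. T (x n)) \<longlonglongrightarrow> z \<longrightarrow>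
      (\<lambda>n. dist (T (g (x n))) (g (T (x n)))) \<longlonglongrightarrow> 0)"

definition commute_at_coincidence :: "('a \<Rightarrow> 'a) \<Rightarrow> ('a \<Rightarrow> 'a) \<Rightarrow> bool" where
  "commute_at_coincidence T g \<longleftrightarrow> (\<forall>x. T x = g x \<longrightarrow> T (g x) = g (T x))"

end

theory Submission
  imports Defs
begin

lemma lsc_limit_le:
  assumes "lsc_on S G" "\<And>n. f n \<in> S" "p \<in> S" "f \<longlonglongrightarrow> p" "\<And>n. G (f n) \<le> 0"
  shows "G p \<le> 0"
proof (rule ccontr)
  assume "\<not> G p \<le> 0"
  hence pos: "G p / 2 > 0" by simp
  obtain d where d: "d > 0" "\<forall>y\<in>S. dist y p < d \<longrightarrow> G p - G p / 2 < G y"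
    using assms(1) assms(3) pos unfolding lsc_on_def by blast
  obtain N where "\<forall>n\<ge>N. dist (f n) p < d"
    using assms(4) d(1) unfolding lim_sequentially by blast
  hence "G p - G p / 2 < G (f N)" using d assms(2) by auto
  moreover have "G (f N) \<le> 0" by fact
  ultimately show False using pos by linarith
qed

lemma iter_nonneg:
  fixes \<phi> :: "real \<Rightarrow> real"
  assumes "\<forall>t\<ge>0. \<phi> t \<ge> 0" "t \<ge> 0"
  shows "(\<phi> ^^ n) t \<ge> 0"
proof (induction n)
  case 0 show ?case using assms by simp
next
  case (Suc n) then show ?case using assms by simp
qed

lemma iter_zero:
  fixes \<phi> :: "real \<Rightarrow> real"
  assumes "\<phi> 0 = 0"
  shows "(\<phi> ^^ n) 0 = 0"
proof (induction n)
  case 0 show ?case by simp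
next
  case (Suc n) then show ?case using assms by simp
qed

theorem corollary5:
  fixes T g :: "'a::metric_space \<Rightarrow> 'a" and Y :: "'a set" and G :: "real6 \<Rightarrow> real"
  assumes Ycomplete: "complete Y"
    and a: "range T \<subseteq> Y \<inter> range g"
    and Gclass: "G \<in> GClass" and G3: "G3 G"
    and b: "\<forall>x y. G (dist (T x) (T y), dist (g x) (g y), dist (g x) (T x), dist (g y) (T y),
                      dist (g x) (T y), dist (g y) (T x)) \<le> 0"
    and e: "Y \<subseteq> range g \<or> (compatible T g \<and> continuous_on UNIV T \<and> continuous_on UNIV g)"
    and comm: "commute_at_coincidence T g"
  shows "\<exists>!z. T z = z \<and> g z = z"
proof -
  note GC = Gclass[unfolded GClass_def mem_Collect_eq]
  have lsc: "lsc_on nonneg6 G" using GC by (rule conjunct1)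
  have dec5': "\<forall>a b c d e e' f. 0 \<le> a \<longrightarrow> 0 \<le> b \<longrightarrow> 0 \<le> c \<longrightarrow> 0 \<le> d \<longrightarrow> 0 \<le> e \<longrightarrow> e \<le> e' \<longrightarrow> 0 \<le> f
            \<longrightarrow> G (a,b,c,d,e',f) \<le> G (a,b,c,d,e,f)"
    using GC[THEN conjunct2] by (rule conjunct1)
  note dec5 = dec5'[rule_format]
  have ex\<phi>: "\<exists>\<phi>\<in>PhiClass. \<forall>r s. 0 \<le> r \<longrightarrow> 0 \<le> s \<longrightarrow> G (r,s,s,r,r+s,0) \<le> 0 \<longrightarrow> r \<le> \<phi> s"
    using GC[THEN conjunct2, THEN conjunct2, THEN conjunct2] by (rule conjunct1)
  obtain \<phi> where phi: "\<phi> \<in> PhiClass"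
    and G1': "\<forall>r s. 0 \<le> r \<longrightarrow> 0 \<le> s \<longrightarrow> G (r,s,s,r,r+s,0) \<le> 0 \<longrightarrow> r \<le> \<phi> s"
    using ex\<phi> by (rule bexE)
  note G1 = G1'[rule_format]
  have G2': "\<forall>r>0. G (r,0,r,0,0,r) > 0"
    using GC[THEN conjunct2, THEN conjunct2, THEN conjunct2] by (rule conjunct2)
  note G2 = G2'[rule_format]
  have G3': "\<And>r. r > 0 \<Longrightarrow> G (r,r,0,0,r,r) > 0" using G3 unfolding G3_def by simp
  note PC = phi[unfolded PhiClass_def mem_Collect_eq]
  have phinn: "\<forall>t\<ge>0. \<phi> t \<ge> 0" using PC by (rule conjunct1)
  have phimono: "mono_on {0..} \<phi>" using PC[THEN conjunct2] by (rule conjunct1)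
  have phi0: "\<phi> 0 = 0" using PC[THEN conjunct2, THEN conjunct2] by (rule conjunct1)
  have phisum': "\<forall>t>0. summable (\<lambda>n. (\<phi> ^^ Suc n) t)"
    using PC[THEN conjunct2, THEN conjunct2] by (rule conjunct2)
  note phisum = phisum'[rule_format]
  have uniq: "z = w" if "T z = z" "g z = z" "T w = w" "g w = w" for z w
  proof (rule ccontr)
    assume "z \<noteq> w"
    hence "dist z w > 0" by simp
    hence "G (dist z w, dist z w, 0, 0, dist z w, dist z w) > 0" by (rule G3')
    moreover have "G (dist (T z) (T w), dist (g z) (g w), dist (g z) (T z), dist (g w) (T w),
                      dist (g z) (T w), dist (g w) (T z)) \<le> 0"
      using b by blast
    hence "G (dist z w, dist z w, 0, 0, dist z w, dist z w) \<le> 0"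
      by (simp only: that dist_self dist_commute[of w z])
    ultimately show False by linarith
  qed
  have ex: "\<exists>w. g w = T z" for z
  proof -
    have "T z \<in> range g" using a by blast
    then show ?thesis by (metis imageE)
  qed
  define x where "x = rec_nat undefined (\<lambda>_ z. SOME w. g w = T z)"
  have xS: "g (x (Suc n)) = T (x n)" for n
  proof -
    have "x (Suc n) = (SOME w. g w = T (x n))" unfolding x_def by simp
    then show ?thesis using someI_ex[OF ex[of "x n"]] by simp
  qed
  define y where "y n = T (x n)" for n
  have gx: "g (x (Suc n)) = y n" for n using xS y_def by simp
  have yY: "y n \<in> Y" for n using a y_def by auto
  define d where "d n = dist (y n) (y (Suc n))" for n
  have dnn: "d n \<ge> 0" for n unfolding d_def by simp
  have step: "d (Suc n) \<le> \<phi> (d n)" for n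
  proof -
    let ?r = "d (Suc n)" and ?s = "d n"
    have "G (?r, ?s, ?s, ?r, dist (y n) (y (Suc (Suc n))), 0) \<le> 0"
      using b[rule_format, of "x (Suc n)" "x (Suc (Suc n))"]
      by (simp add: gx y_def[symmetric] d_def)
    moreover have "dist (y n) (y (Suc (Suc n))) \<le> ?r + ?s"
      unfolding d_def using dist_triangle[of "y n" "y (Suc (Suc n))" "y (Suc n)"] by simp
    ultimately have "G (?r, ?s, ?s, ?r, ?r + ?s, 0) \<le> 0"
      using dec5[of ?r ?s ?s ?r "dist (y n) (y (Suc (Suc n)))" "?r + ?s" 0] dnn by force
    thus ?thesis using G1 dnn by blast
  qed
  have dle: "d n \<le> (\<phi> ^^ n) (d 0)" for n
  proof (induction n)
    case 0 then show ?case by simp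
  next
    case (Suc n)
    have "d (Suc n) \<le> \<phi> (d n)" by (rule step)
    also have "\<phi> (d n) \<le> \<phi> ((\<phi> ^^ n) (d 0))"
      using mono_onD[OF phimono, of "d n" "(\<phi> ^^ n) (d 0)"] Suc dnn[of n] iter_nonneg[OF phinn dnn[of 0], of n]
      by simp
    finally show ?case by simp
  qed
  have sumit: "summable (\<lambda>n. (\<phi> ^^ n) (d 0))"
  proof (cases "d 0 = 0")
    case True then show ?thesis using iter_zero[of \<phi>, OF phi0] by simp
  next
    case False
    hence "d 0 > 0" using dnn[of 0] by simp
    then show ?thesis using phisum summable_Suc_iff by blast
  qed
  have sumd: "summable d"
  proof (rule summable_comparison_test[OF _ sumit])
    show "\<exists>N. \<forall>n\<ge>N. norm (d n) \<le> (\<phi> ^^ n) (d 0)"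
      using dle dnn by (simp add: abs_of_nonneg)
  qed
  have tri: "dist (y m) (y (m + k)) \<le> sum d {m..<m+k}" for m k
  proof (induction k)
    case 0 then show ?case by simp
  next
    case (Suc k)
    have "dist (y m) (y (m + Suc k)) \<le> dist (y m) (y (m + k)) + d (m + k)"
      unfolding d_def by (simp add: dist_triangle)
    also have "\<dots> \<le> sum d {m..<m+k} + d (m+k)" using Suc by simp
    finally show ?case by simp
  qed
  have "Cauchy y"
  proof (rule metric_CauchyI)
    fix \<epsilon> :: real assume "\<epsilon> > 0"
    then obtain N where N: "\<forall>m\<ge>N. \<forall>n. norm (sum d {m..<n}) < \<epsilon>"
      using sumd summable_Cauchy by blast
    have "dist (y m) (y n) < \<epsilon>" if "m \<ge> N" "n \<ge> N" for m n
    proof (cases "m \<le> n")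
      case True
      have "dist (y m) (y n) \<le> sum d {m..<n}" using tri[of m "n - m"] True by simp
      also have "\<dots> < \<epsilon>" using N[rule_format, OF that(1), of n] by (simp add: abs_less_iff)
      finally show ?thesis .
    next
      case False
      have "dist (y n) (y m) \<le> sum d {n..<m}" using tri[of n "m - n"] False by simp
      also have "\<dots> < \<epsilon>" using N[rule_format, OF that(2), of m] by (simp add: abs_less_iff)
      finally show ?thesis by (simp add: dist_commute)
    qed
    thus "\<exists>M. \<forall>m\<ge>M. \<forall>n\<ge>M. dist (y m) (y n) < \<epsilon>" by blast
  qed
  then obtain u where uY: "u \<in> Y" and yu: "y \<longlonglongrightarrow> u"
    using Ycomplete yY unfolding complete_def by blast
  have yu1: "(\<lambda>n. y (Suc n)) \<longlonglongrightarrow> u" using yu LIMSEQ_Suc by blast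
  have lim: "G (dist (T p) u, dist (g p) u, dist (g p) (T p), 0, dist (g p) u, dist u (T p)) \<le> 0" for p
  proof (rule lsc_limit_le[OF lsc])
    let ?f = "\<lambda>n. (dist (T p) (y (Suc n)), dist (g p) (y n), dist (g p) (T p),
                   dist (y n) (y (Suc n)), dist (g p) (y (Suc n)), dist (y n) (T p))"
    show "?f n \<in> nonneg6" for n unfolding nonneg6_def by simp
    show "(dist (T p) u, dist (g p) u, dist (g p) (T p), 0, dist (g p) u, dist u (T p)) \<in> nonneg6"
      unfolding nonneg6_def by simp
    show "G (?f n) \<le> 0" for n
      using b[rule_format, of p "x (Suc n)"] by (simp add: gx y_def[symmetric])
    have d0: "(\<lambda>n. dist (y n) (y (Suc n))) \<longlonglongrightarrow> dist u u"
      by (intro tendsto_intros yu yu1)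
    show "?f \<longlonglongrightarrow> (dist (T p) u, dist (g p) u, dist (g p) (T p), 0, dist (g p) u, dist u (T p))"
      using d0 by (intro tendsto_Pair tendsto_intros yu yu1) simp_all
  qed
  have coinc: "T w = u" if "T w = g w" for w
  proof (rule ccontr)
    assume "T w \<noteq> u"
    hence "dist (T w) u > 0" by simp
    moreover have "G (dist (T w) u, dist (T w) u, 0, 0, dist (T w) u, dist (T w) u) \<le> 0"
      using lim[of w] that by (simp add: dist_commute)
    ultimately show False using G3'[of "dist (T w) u"] by simp
  qed
  obtain w where w: "T w = g w"
  proof (cases "Y \<subseteq> range g")
    case True
    then obtain v where v: "g v = u" using uY by blast
    have "T v = u"
    proof (rule ccontr)
      assume "T v \<noteq> u"
      hence "dist (T v) u > 0" by simp
      moreover have "G (dist (T v) u, 0, dist (T v) u, 0, 0, dist (T v) u) \<le> 0"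
        using lim[of v] v by (simp add: dist_commute)
      ultimately show False using G2[of "dist (T v) u"] by simp
    qed
    then show ?thesis using that[of v] v by simp
  next
    case False
    then have comp: "compatible T g" and cT: "continuous_on UNIV T" and cg: "continuous_on UNIV g"
      using e by auto
    have "(\<lambda>n. dist (T (g (x (Suc n)))) (g (T (x (Suc n))))) \<longlonglongrightarrow> 0"
    proof -
      have h1: "(\<lambda>n. g (x (Suc n))) \<longlonglongrightarrow> u" using yu by (simp add: gx)
      have h2: "(\<lambda>n. T (x (Suc n))) \<longlonglongrightarrow> u" using yu1 by (simp add: y_def)
      show ?thesis using comp[unfolded compatible_def, rule_format, of "\<lambda>n. x (Suc n)" u] h1 h2 by simp
    qed
    hence l0: "(\<lambda>n. dist (T (y n)) (g (y (Suc n)))) \<longlonglongrightarrow> 0"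
      by (simp add: gx y_def[symmetric])
    have iT: "isCont T u" and ig: "isCont g u"
      using cT cg continuous_on_eq_continuous_at[OF open_UNIV] by auto
    have "(\<lambda>n. dist (T (y n)) (g (y (Suc n)))) \<longlonglongrightarrow> dist (T u) (g u)"
      by (intro tendsto_dist isCont_tendsto_compose[OF iT yu] isCont_tendsto_compose[OF ig yu1])
    hence "dist (T u) (g u) = 0" using l0 LIMSEQ_unique by blast
    then show ?thesis using that by simp
  qed
  have Tw: "T w = u" using coinc w by blast
  have gw: "g w = u" using Tw w by simp
  have "T u = g u" using comm w unfolding commute_at_coincidence_def by (metis Tw gw)
  hence Tu: "T u = u" using coinc by blast
  hence gu: "g u = u" using \<open>T u = g u\<close> by simp
  show ?thesis using Tu gu uniq by blast
qed

end
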